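(* Let $r\ge2$. If $\ell\in\mathcal M^1(\mathcal R_r)$ satisfies $\ell^r\ge\log 3$, then $\min\{\ell^i: i\in[r-1]\}\le\log(4r-5)$.
   Context: $\mathcal R_r$ is the rose with one vertex and $r$ loop edges identified with $[r]=\{1,\dots,r\}$; a length function is $\ell=(\ell^1,\dots,\ell^r)\in\mathbb R^r_{>0}$. The entropy is $\mathfrak h_{\mathcal R_r}(\ell)=\lim_{t\to\infty}\frac1t\log\#\{\gamma:\ell(\gamma)\le t\}$ over based circuits $\gamma$ (cyclically reduced closed edge paths in the oriented petals), and $\mathcal M^1(\mathcal R_r)=\{\ell:\mathfrak h_{\mathcal R_r}(\ell)=1\}$. *)

theory Defs
  imports Complex_Main
begin

text \<open>Oriented edges of the rose R_r: a petal index i together with an orientation.\<close>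
type_synonym oedge = "nat \<times> bool"

definition oinv :: "oedge \<Rightarrow> oedge" where
  "oinv e = (fst e, \<not> snd e)"

text \<open>Based circuits of R_r: nonempty, reduced and cyclically reduced words in the
  oriented petals 1..r.\<close>
definition based_circuit :: "nat \<Rightarrow> oedge list \<Rightarrow> bool" where
  "based_circuit r w \<longleftrightarrow>
     w \<noteq> [] \<and> set w \<subseteq> {1..r} \<times> UNIV \<and>
     (\<forall>k. Suc k < length w \<longrightarrow> w ! Suc k \<noteq> oinv (w ! k)) \<and>
     last w \<noteq> oinv (hd w)"

definition circuit_length :: "(nat \<Rightarrow> real) \<Rightarrow> oedge list \<Rightarrow> real" where
  "circuit_length l w = sum_list (map (\<lambda>e. l (fst e)) w)"

definition circuit_count :: "nat \<Rightarrow> (nat \<Rightarrow> real) \<Rightarrow> real \<Rightarrow> nat" where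
  "circuit_count r l t = card {w. based_circuit r w \<and> circuit_length l w \<le> t}"

text \<open>Normalized length functions M^1(R_r): positive lengths on petals 1..r whose
  entropy, the limit of (1/t) log #{gamma : l(gamma) <= t} as t goes to infinity, equals 1.\<close>
definition in_M1 :: "nat \<Rightarrow> (nat \<Rightarrow> real) \<Rightarrow> bool" where
  "in_M1 r l \<longleftrightarrow> (\<forall>i\<in>{1..r}. 0 < l i) \<and>
     ((\<lambda>t. ln (real (circuit_count r l t)) / t) \<longlongrightarrow> 1) at_top"

end

theory Submission
  imports Defs
begin

definition Ed :: "nat \<Rightarrow> oedge set" where "Ed r = {1..r} \<times> UNIV"
definition red :: "nat \<Rightarrow> oedge list \<Rightarrow> bool" where
  "red r w \<longleftrightarrow> set w \<subseteq> Ed r \<and> (\<forall>k. Suc k < length w \<longrightarrow> w ! Suc k \<noteq> oinv (w ! k))"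
definition Ls :: "nat \<Rightarrow> nat \<Rightarrow> oedge list set" where
  "Ls r n = {w. set w \<subseteq> Ed r \<and> length w = n}"
definition wt :: "real \<Rightarrow> (nat \<Rightarrow> real) \<Rightarrow> oedge list \<Rightarrow> real" where
  "wt s l w = exp (- s * circuit_length l w)"
definition H :: "nat \<Rightarrow> real \<Rightarrow> (nat \<Rightarrow> real) \<Rightarrow> nat \<Rightarrow> oedge \<Rightarrow> real" where
  "H r s l n e = (\<Sum>w\<in>Ls r n. if red r (e # w) then wt s l (e # w) else 0)"

lemma finite_Ed: "finite (Ed r)" unfolding Ed_def by simp
lemma finite_Ls: "finite (Ls r n)" unfolding Ls_def by (rule finite_lists_length_eq[OF finite_Ed])

lemma red_Nil: "red r []" by (simp add: red_def)

lemma red_Cons: "red r (a # w) \<longleftrightarrow> a \<in> Ed r \<and> red r w \<and> (w \<noteq> [] \<longrightarrow> hd w \<noteq> oinv a)"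
proof
  assume h: "red r (a # w)"
  have A: "\<forall>k. Suc k < length (a#w) \<longrightarrow> (a#w) ! Suc k \<noteq> oinv ((a#w) ! k)" using h by (simp add: red_def)
  have "\<forall>k. Suc k < length w \<longrightarrow> w ! Suc k \<noteq> oinv (w ! k)"
  proof (intro allI impI)
    fix k assume "Suc k < length w"
    then show "w ! Suc k \<noteq> oinv (w ! k)" using A[rule_format, of "Suc k"] by simp
  qed
  moreover have "w \<noteq> [] \<longrightarrow> hd w \<noteq> oinv a"
    using A[rule_format, of 0] by (cases w) auto
  ultimately show "a \<in> Ed r \<and> red r w \<and> (w \<noteq> [] \<longrightarrow> hd w \<noteq> oinv a)"
    using h by (simp add: red_def)
next
  assume h: "a \<in> Ed r \<and> red r w \<and> (w \<noteq> [] \<longrightarrow> hd w \<noteq> oinv a)"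
  have "\<forall>k. Suc k < length (a#w) \<longrightarrow> (a#w) ! Suc k \<noteq> oinv ((a#w) ! k)"
  proof (intro allI impI)
    fix k assume k: "Suc k < length (a#w)"
    show "(a#w) ! Suc k \<noteq> oinv ((a#w) ! k)"
    proof (cases k)
      case 0 then show ?thesis using h k by (cases w) auto
    next
      case (Suc j) then show ?thesis using h k by (simp add: red_def)
    qed
  qed
  then show "red r (a # w)" using h by (simp add: red_def)
qed

lemma wt_Cons: "wt s l (a # w) = exp (- s * l (fst a)) * wt s l w"
  by (simp add: wt_def circuit_length_def algebra_simps exp_add[symmetric])

lemma Ls_Suc: "Ls r (Suc n) = (\<lambda>(xs, n). n#xs) ` (Ls r n \<times> Ed r)"
  unfolding Ls_def by (rule lists_length_Suc_eq)

lemma sum_Ls_Suc: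
  "(\<Sum>w\<in>Ls r (Suc n). f w) = (\<Sum>a\<in>Ed r. \<Sum>w\<in>Ls r n. f (a # w))"
proof -
  have "inj_on (\<lambda>(xs, n). n#xs) (Ls r n \<times> Ed r)" by (auto simp: inj_on_def)
  then have "(\<Sum>w\<in>Ls r (Suc n). f w) = (\<Sum>p\<in>Ls r n \<times> Ed r. f (snd p # fst p))"
    unfolding Ls_Suc by (subst sum.reindex) (auto intro!: sum.cong)
  also have "\<dots> = (\<Sum>w\<in>Ls r n. \<Sum>a\<in>Ed r. f (a # w))"
    by (simp add: sum.cartesian_product case_prod_beta)
  also have "\<dots> = (\<Sum>a\<in>Ed r. \<Sum>w\<in>Ls r n. f (a # w))" by (rule sum.swap)
  finally show ?thesis .
qed

lemma oinv_Ed: "e \<in> Ed r \<Longrightarrow> oinv e \<in> Ed r" by (auto simp: Ed_def oinv_def)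

lemma H_Suc:
  assumes "e \<in> Ed r"
  shows "H r s l (Suc n) e = exp (- s * l (fst e)) * (\<Sum>a\<in>Ed r. if a \<noteq> oinv e then H r s l n a else 0)"
proof -
  have "H r s l (Suc n) e = (\<Sum>a\<in>Ed r. \<Sum>w\<in>Ls r n. if red r (e # a # w) then wt s l (e # a # w) else 0)"
    unfolding H_def by (rule sum_Ls_Suc)
  also have "\<dots> = (\<Sum>a\<in>Ed r. exp (- s * l (fst e)) * (if a \<noteq> oinv e then H r s l n a else 0))"
  proof (rule sum.cong[OF refl])
    fix a assume "a \<in> Ed r"
    show "(\<Sum>w\<in>Ls r n. if red r (e # a # w) then wt s l (e # a # w) else 0) =
      exp (- s * l (fst e)) * (if a \<noteq> oinv e then H r s l n a else 0)"
      unfolding H_def using assms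
      by (auto simp: red_Cons[where a=e] wt_Cons[where a=e] sum_distrib_left intro!: sum.cong)
  qed
  also have "\<dots> = exp (- s * l (fst e)) * (\<Sum>a\<in>Ed r. if a \<noteq> oinv e then H r s l n a else 0)"
    by (simp add: sum_distrib_left)
  finally show ?thesis .
qed

lemma sum_bool_const: "(\<Sum>b\<in>(UNIV::bool set). (c::real)) = 2 * c"
  by (simp only: sum_constant card_UNIV_bool)

lemma sum_Ed: "(\<Sum>a\<in>Ed r. (g::nat\<Rightarrow>real) (fst a)) = 2 * (\<Sum>i\<in>{1..r}. g i)"
proof -
  have "(\<Sum>a\<in>Ed r. g (fst a)) = (\<Sum>i\<in>{1..r}. \<Sum>b\<in>(UNIV::bool set). g i)"
    unfolding Ed_def by (simp only: sum.cartesian_product case_prod_unfold)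
  also have "\<dots> = (\<Sum>i\<in>{1..r}. 2 * g i)" by (simp only: sum_bool_const)
  finally show ?thesis by (simp add: sum_distrib_left)
qed

lemma aux24: "(2::real) * (\<Sum>i\<in>A. 2 * f i) = 4 * (\<Sum>i\<in>A. f i)"
  by (simp add: sum_distrib_left)

lemma H_nonneg: "0 \<le> H r s l n e"
  unfolding H_def wt_def by (auto intro!: sum_nonneg)

lemma H_bound:
  assumes s: "0 < s" and lpos: "\<forall>i\<in>{1..r}. 0 < l i"
    and V: "(\<Sum>i\<in>{1..r}. exp (- s * l i) / (1 + exp (- s * l i))) \<le> 1/2"
    and e: "e \<in> Ed r"
  shows "H r s l n e \<le> 2 * (exp (- s * l (fst e)) / (1 + exp (- s * l (fst e))))"
  using e
proof (induction n arbitrary: e)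
  case 0
  have "Ls r 0 = {[]}" by (auto simp: Ls_def)
  then have "H r s l 0 e = exp (- s * l (fst e))"
    using 0 by (simp add: H_def red_Cons red_Nil wt_def circuit_length_def)
  moreover have "exp (- s * l (fst e)) \<le> 2 * (exp (- s * l (fst e)) / (1 + exp (- s * l (fst e))))"
  proof -
    have "fst e \<in> {1..r}" using 0 by (auto simp: Ed_def)
    then have "l (fst e) > 0" using lpos by auto
    then have "exp (- s * l (fst e)) < 1" using s by (simp add: mult_pos_pos)
    moreover have "\<And>y::real. 0 < y \<Longrightarrow> y < 1 \<Longrightarrow> y \<le> 2 * (y / (1 + y))"
      by (simp add: field_simps)
    ultimately show ?thesis by simp
  qed
  ultimately show ?case by simp
next
  case (Suc n)
  define x where "x = (\<lambda>i. exp (- s * l i))"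
  define v where "v = (\<lambda>i. x i / (1 + x i))"
  have xpos: "\<And>i. x i > 0" by (simp add: x_def)
  have oe: "oinv e \<in> Ed r" using Suc.prems by (rule oinv_Ed)
  have fo: "fst (oinv e) = fst e" by (simp add: oinv_def)
  have "(\<Sum>a\<in>Ed r. if a \<noteq> oinv e then H r s l n a else 0)
      \<le> (\<Sum>a\<in>Ed r. if a \<noteq> oinv e then 2 * v (fst a) else 0)"
    using Suc.IH unfolding v_def x_def by (intro sum_mono) auto
  also have "\<dots> = (\<Sum>a\<in>Ed r. 2 * v (fst a)) - 2 * v (fst e)"
  proof -
    have "(\<Sum>a\<in>Ed r. 2 * v (fst a)) = 2 * v (fst (oinv e)) + (\<Sum>a\<in>Ed r - {oinv e}. 2 * v (fst a))"
      by (rule sum.remove[OF finite_Ed oe])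
    moreover have "(\<Sum>a\<in>Ed r. if a \<noteq> oinv e then 2 * v (fst a) else 0) = 0 + (\<Sum>a\<in>Ed r - {oinv e}. if a \<noteq> oinv e then 2 * v (fst a) else 0)"
      using sum.remove[OF finite_Ed oe, of "\<lambda>a. if a \<noteq> oinv e then 2 * v (fst a) else 0"] by simp
    moreover have "(\<Sum>a\<in>Ed r - {oinv e}. if a \<noteq> oinv e then 2 * v (fst a) else 0) = (\<Sum>a\<in>Ed r - {oinv e}. 2 * v (fst a))"
      by (rule sum.cong) auto
    ultimately show ?thesis using fo by simp
  qed
  also have "\<dots> \<le> 2 - 2 * v (fst e)"
  proof -
    have "(\<Sum>a\<in>Ed r. 2 * v (fst a)) = 2 * (\<Sum>i\<in>{1..r}. 2 * v i)" by (rule sum_Ed)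
    also have "\<dots> = 4 * (\<Sum>i\<in>{1..r}. v i)" by (simp add: sum_distrib_left)
    finally have "(\<Sum>a\<in>Ed r. 2 * v (fst a)) = 4 * (\<Sum>i\<in>{1..r}. v i)" .
    moreover have "(\<Sum>i\<in>{1..r}. v i) \<le> 1/2" using V by (simp add: v_def x_def)
    ultimately show ?thesis by simp
  qed
  finally have B: "(\<Sum>a\<in>Ed r. if a \<noteq> oinv e then H r s l n a else 0) \<le> 2 - 2 * v (fst e)" .
  have "H r s l (Suc n) e = x (fst e) * (\<Sum>a\<in>Ed r. if a \<noteq> oinv e then H r s l n a else 0)"
    using H_Suc[OF Suc.prems] by (simp add: x_def)
  also have "\<dots> \<le> x (fst e) * (2 - 2 * v (fst e))"
    using B xpos by (intro mult_left_mono) (auto simp: less_imp_le)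
  also have "\<dots> = 2 * v (fst e)"
    using xpos[of "fst e"] by (simp add: v_def field_simps)
  finally show ?case by (simp add: v_def x_def)
qed

definition P :: "nat \<Rightarrow> real \<Rightarrow> (nat \<Rightarrow> real) \<Rightarrow> nat \<Rightarrow> real" where
  "P r s l n = (\<Sum>w\<in>Ls r n. if red r w then wt s l w else 0)"

lemma P_0: "P r s l 0 = 1"
proof -
  have "Ls r 0 = {[]}" by (auto simp: Ls_def)
  then show ?thesis by (simp add: P_def red_Nil wt_def circuit_length_def)
qed

lemma P_Suc_bound:
  assumes s: "0 < s" and lpos: "\<forall>i\<in>{1..r}. 0 < l i"
    and V: "(\<Sum>i\<in>{1..r}. exp (- s * l i) / (1 + exp (- s * l i))) \<le> 1/2"
  shows "P r s l (Suc n) \<le> 2"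
proof -
  have "P r s l (Suc n) = (\<Sum>a\<in>Ed r. H r s l n a)"
    unfolding P_def H_def by (rule sum_Ls_Suc)
  also have "\<dots> \<le> (\<Sum>a\<in>Ed r. 2 * (exp (- s * l (fst a)) / (1 + exp (- s * l (fst a)))))"
    by (rule sum_mono) (rule H_bound[OF s lpos V])
  also have "\<dots> = 2 * (\<Sum>i\<in>{1..r}. 2 * (exp (- s * l i) / (1 + exp (- s * l i))))"
    by (rule sum_Ed)
  also have "\<dots> = 4 * (\<Sum>i\<in>{1..r}. (exp (- s * l i) / (1 + exp (- s * l i))))"
    by (rule aux24)
  also have "\<dots> \<le> 2" using V by linarith
  finally show ?thesis .
qed

lemma length_bound:
  assumes "set w \<subseteq> Ed r" "\<forall>i\<in>{1..r}. m0 \<le> l i"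
  shows "real (length w) * m0 \<le> circuit_length l w"
  using assms
proof (induction w)
  case Nil then show ?case by (simp add: circuit_length_def)
next
  case (Cons a w)
  have "fst a \<in> {1..r}" using Cons.prems by (auto simp: Ed_def)
  then have "m0 \<le> l (fst a)" using Cons.prems by auto
  moreover have "real (length w) * m0 \<le> circuit_length l w" using Cons by auto
  ultimately show ?case by (simp add: circuit_length_def algebra_simps)
qed

lemma sum_P_bound:
  assumes s: "0 < s" and lpos: "\<forall>i\<in>{1..r}. 0 < l i"
    and V: "(\<Sum>i\<in>{1..r}. exp (- s * l i) / (1 + exp (- s * l i))) \<le> 1/2"
  shows "(\<Sum>n\<le>K. P r s l n) \<le> 1 + 2 * real K"
proof (induction K)
  case 0 then show ?case by (simp add: P_0)
next
  case (Suc K)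
  then show ?case using P_Suc_bound[OF s lpos V, of K] by simp
qed

lemma count_bound:
  assumes s: "0 < s" and lpos: "\<forall>i\<in>{1..r}. 0 < l i"
    and V: "(\<Sum>i\<in>{1..r}. exp (- s * l i) / (1 + exp (- s * l i))) \<le> 1/2"
    and m0: "0 < m0" "\<forall>i\<in>{1..r}. m0 \<le> l i" and t: "0 \<le> t"
  shows "real (circuit_count r l t) \<le> (1 + 2 * (t / m0)) * exp (s * t)"
proof -
  define K where "K = nat \<lfloor>t / m0\<rfloor>"
  have K: "real K \<le> t / m0" unfolding K_def using t m0 by simp
  define S where "S = {w. based_circuit r w \<and> circuit_length l w \<le> t}"
  define U where "U = (\<Union>n\<in>{..K}. Ls r n)"
  define g where "g = (\<lambda>w. if red r w then wt s l w else 0)"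
  have finU: "finite U" unfolding U_def using finite_Ls by auto
  have SU: "S \<subseteq> U"
  proof
    fix w assume "w \<in> S"
    then have bc: "based_circuit r w" and cl: "circuit_length l w \<le> t" by (auto simp: S_def)
    have se: "set w \<subseteq> Ed r" using bc by (simp add: based_circuit_def Ed_def)
    have "real (length w) * m0 \<le> t" using length_bound[OF se m0(2)] cl by simp
    then have "real (length w) \<le> t / m0" using m0 by (simp add: field_simps)
    then have "length w \<le> K" unfolding K_def by (simp add: le_nat_floor)
    then show "w \<in> U" using se by (auto simp: U_def Ls_def)
  qed
  have redS: "\<And>w. w \<in> S \<Longrightarrow> red r w"
    by (auto simp: S_def based_circuit_def red_def Ed_def)
  have "real (card S) = (\<Sum>w\<in>S. 1)" by simp
  also have "\<dots> \<le> (\<Sum>w\<in>S. exp (s * t) * g w)"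
  proof (rule sum_mono)
    fix w assume w: "w \<in> S"
    then have "circuit_length l w \<le> t" by (simp add: S_def)
    then have "exp (s * t) * exp (- s * circuit_length l w) \<ge> 1"
      using s by (simp add: exp_add[symmetric] mult_left_mono)
    then show "1 \<le> exp (s * t) * g w" using redS[OF w] by (simp add: g_def wt_def)
  qed
  also have "\<dots> \<le> (\<Sum>w\<in>U. exp (s * t) * g w)"
    by (rule sum_mono2[OF finU SU]) (auto simp: g_def wt_def)
  also have "\<dots> = exp (s * t) * (\<Sum>n\<in>{..K}. \<Sum>w\<in>Ls r n. g w)"
  proof -
    have "(\<Sum>w\<in>U. g w) = (\<Sum>n\<in>{..K}. \<Sum>w\<in>Ls r n. g w)"
      unfolding U_def
      by (rule sum.UNION_disjoint) (auto simp: finite_Ls finite_lists_length_eq[OF finite_Ed] Ls_def)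
    then show ?thesis by (simp add: sum_distrib_left[symmetric])
  qed
  also have "\<dots> = exp (s * t) * (\<Sum>n\<le>K. P r s l n)" by (simp add: P_def g_def)
  also have "\<dots> \<le> exp (s * t) * (1 + 2 * real K)"
    using sum_P_bound[OF s lpos V, of K] by (simp add: mult_left_mono)
  also have "\<dots> \<le> exp (s * t) * (1 + 2 * (t / m0))" using K by simp
  finally show ?thesis by (simp add: circuit_count_def S_def mult.commute)
qed

theorem mainTheorem15:
  fixes r :: nat and l :: "nat \<Rightarrow> real"
  assumes "r \<ge> 2"
    and "in_M1 r l"
    and "l r \<ge> ln 3"
  shows "Min (l ` {1..r-1}) \<le> ln (4 * real r - 5)"
proof (rule ccontr)
  assume "\<not> ?thesis"
  then have big: "ln (4 * real r - 5) < Min (l ` {1..r-1})" by simp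
  have ne: "{1..r-1} \<noteq> {}" using assms(1) by auto
  have bigi: "\<And>i. i \<in> {1..r-1} \<Longrightarrow> ln (4 * real r - 5) < l i"
    using big ne by (simp add: Min_gr_iff)
  have lpos: "\<forall>i\<in>{1..r}. 0 < l i" and lim: "((\<lambda>t. ln (real (circuit_count r l t)) / t) \<longlongrightarrow> 1) at_top"
    using assms(2) by (auto simp: in_M1_def)
  define a where "a = 4 * real r - 5"
  have a3: "a \<ge> 3" using assms(1) by (simp add: a_def)
  define \<phi> where "\<phi> = (\<lambda>s. \<Sum>i\<in>{1..r}. exp (- s * l i) / (1 + exp (- s * l i)))"
  have phi1: "\<phi> 1 < 1/2"
  proof -
    have r1: "r = Suc (r - 1)" using assms(1) by simp
    have split: "\<phi> 1 = (\<Sum>i\<in>{1..r-1}. exp (- l i) / (1 + exp (- l i))) + exp (- l r) / (1 + exp (- l r))"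
      unfolding \<phi>_def by (subst r1, subst sum.cl_ivl_Suc) (use r1 in auto)
    have lt: "\<And>i. i \<in> {1..r-1} \<Longrightarrow> exp (- l i) / (1 + exp (- l i)) < 1 / (a + 1)"
    proof -
      fix i assume i: "i \<in> {1..r-1}"
      have ea: "exp (ln a) = a" using a3 by simp
      have "exp (ln a) < exp (l i)" using bigi[OF i] unfolding a_def by simp
      then have "exp (l i) > a" using ea by simp
      then have y: "exp (- l i) * a < 1" using a3 by (simp add: exp_minus field_simps)
      have d: "0 < 1 + exp (- l i)" by (simp add: add_pos_pos)
      have "exp (- l i) + a * exp (- l i) < 1 + exp (- l i)" using y by (simp add: mult.commute)
      then show "exp (- l i) / (1 + exp (- l i)) < 1 / (a + 1)"
        using d a3 by (simp add: field_simps)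
    qed
    have "(\<Sum>i\<in>{1..r-1}. exp (- l i) / (1 + exp (- l i))) < (\<Sum>i\<in>{1..r-1}. 1 / (a + 1))"
      by (rule sum_strict_mono) (use ne lt in auto)
    also have "\<dots> = real (r - 1) / (a + 1)" by simp
    also have "\<dots> = 1/4" using assms(1) unfolding a_def by (simp add: of_nat_diff field_simps)
    finally have A: "(\<Sum>i\<in>{1..r-1}. exp (- l i) / (1 + exp (- l i))) < 1/4" .
    have "exp (- l r) \<le> exp (- ln 3)" using assms(3) by simp
    then have "exp (- l r) \<le> 1/3" by (simp add: exp_minus)
    moreover have "0 < 1 + exp (- l r)" by (simp add: add_pos_pos)
    ultimately have B: "exp (- l r) / (1 + exp (- l r)) \<le> 1/4" by (simp add: field_simps)
    show ?thesis using A B split by simp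
  qed
  have "(\<phi> \<longlongrightarrow> \<phi> 1) (at_left 1)"
    unfolding \<phi>_def
    proof (intro tendsto_intros)
    fix i show "1 + exp (- 1 * l i) \<noteq> 0"
      using add_pos_pos[OF zero_less_one exp_gt_zero[of "- 1 * l i"]] by linarith
  qed
  then have ev1: "eventually (\<lambda>s. \<phi> s < 1/2) (at_left 1)"
    using phi1 by (rule order_tendstoD(2))
  have "eventually (\<lambda>s. s \<in> {0<..<1} \<and> \<phi> s < 1/2) (at_left (1::real))"
    using eventually_conj[OF eventually_at_left_real[of 0 1] ev1] by simp
  then obtain s where s: "0 < s" "s < 1" "\<phi> s < 1/2"
    using eventually_happens[of _ "at_left (1::real)"] by (auto simp: trivial_limit_at_left_real)
  have V: "(\<Sum>i\<in>{1..r}. exp (- s * l i) / (1 + exp (- s * l i))) \<le> 1/2"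
    using s(3) by (simp add: \<phi>_def)
  define m0 where "m0 = Min (l ` {1..r})"
  have ner: "{1..r} \<noteq> {}" using assms(1) by auto
  have m0pos: "0 < m0" unfolding m0_def using lpos ner by (simp add: Min_gr_iff)
  have m0le: "\<forall>i\<in>{1..r}. m0 \<le> l i" unfolding m0_def by simp
  define c where "c = 1 + 2 / m0"
  have c1: "c \<ge> 1" using m0pos by (simp add: c_def)
  have evle: "eventually (\<lambda>t. ln (real (circuit_count r l t)) / t \<le> s + ln c / t + ln t / t) at_top"
    using eventually_ge_at_top[of "1::real"]
  proof (rule eventually_mono)
    fix t :: real assume t: "1 \<le> t"
    have cb: "real (circuit_count r l t) \<le> (1 + 2 * (t / m0)) * exp (s * t)"
      by (rule count_bound[OF s(1) lpos V m0pos m0le]) (use t in simp)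
    have "1 + 2 * (t / m0) \<le> c * t" using t m0pos by (simp add: c_def field_simps)
    then have "(1 + 2 * (t / m0)) * exp (s * t) \<le> c * t * exp (s * t)"
      by (rule mult_right_mono) simp
    then have cb2: "real (circuit_count r l t) \<le> c * t * exp (s * t)"
      using cb by (rule_tac order_trans) assumption+
    have pos: "0 < c * t * exp (s * t)" using c1 t by simp
    have "ln (real (circuit_count r l t)) \<le> ln (c * t * exp (s * t))"
    proof (cases "circuit_count r l t = 0")
      case True
      have "1 \<le> c * t * exp (s * t)"
      proof -
        have e1: "1 \<le> exp (s * t)" using s(1) t by simp
        have ct: "1 \<le> c * t" using mult_mono[of 1 c 1 t] c1 t by simp
        show ?thesis using mult_mono[OF ct e1] ct by simp
      qed
      then show ?thesis using True by simp
    next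
      case False then show ?thesis using cb2 by simp
    qed
    also have "\<dots> = ln c + ln t + s * t" using c1 t by (simp add: ln_mult)
    finally have "ln (real (circuit_count r l t)) \<le> ln c + ln t + s * t" .
    then have "ln (real (circuit_count r l t)) / t \<le> (ln c + ln t + s * t) / t"
      using t by (simp add: divide_right_mono)
    also have "\<dots> = s + ln c / t + ln t / t" using t by (simp add: field_simps)
    finally show "ln (real (circuit_count r l t)) / t \<le> s + ln c / t + ln t / t" .
  qed
  have lim2: "((\<lambda>t. s + ln c / t + ln t / t) \<longlongrightarrow> s + 0 + 0) at_top"
    by (intro tendsto_intros ln_x_over_x_tendsto_0 tendsto_divide_0[OF tendsto_const] filterlim_at_top_imp_at_infinity filterlim_ident) 
  have "1 \<le> s + 0 + 0"
    by (rule tendsto_le[OF _ lim2 lim evle]) simp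
  then show False using s(2) by simp
qed

end
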